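(* Let $\underline{\mathbf{r}}=(\underline r_1,\dots,\underline r_{n_1})$ and $\mathbf{c}=(c_1,\dots,c_{n_2})$ be non-increasing integer vectors and $\overline{\mathbf{r}}=(\overline r_1,\dots,\overline r_{n_1})$, $\overline{\mathbf{c}}=(\overline c_1,\dots,\overline c_{n_2})$ integer vectors with $\underline{\mathbf{r}}\le\overline{\mathbf{r}}$ and $\mathbf{c}\le\overline{\mathbf{c}}$, such that $(\underline{\mathbf{r}},\overline{\mathbf{r}},\mathbf{c},\overline{\mathbf{c}})$ is realizable and $(\underline{\mathbf{r}},\overline{\mathbf{r}},\mathbf{c},\mathbf{c})$ is not realizable. Then there is a right-most position $i$ with $c_i<\overline c_i$. Let $j$ be the left-most position with $c_j=c_i$, and define $\mathbf{a}=(a_1,\dots,a_{n_2})$, $\overline{\mathbf{a}}=(\overline a_1,\dots,\overline a_{n_2})$ by $a_j=c_j+1$, $a_k=c_k$ for $k\ne j$; and $\overline a_j=\overline c_i$, $\overline a_i=\overline c_j$, $\overline a_k=\overline c_k$ for $k\notin\{i,j\}$. Then $\mathbf{a}$ is non-increasing, $\mathbf{a}\le\overline{\mathbf{a}}$, and $(\underline{\mathbf{r}},\overline{\mathbf{r}},\mathbf{a},\overline{\mathbf{a}})$ is realizable.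
   Context: Inequalities between vectors are componentwise. A four-tuple $(\underline{\mathbf{r}},\overline{\mathbf{r}},\underline{\mathbf{c}},\overline{\mathbf{c}})$ of integer vectors (first two of length $n_1$, last two of length $n_2$) is realizable if there is a bipartite graph $G=(U,V,E)$ with $U=\{u_1,\dots,u_{n_1}\}$, $V=\{v_1,\dots,v_{n_2}\}$ such that $\underline r_i\le d_G(u_i)\le\overline r_i$ and $\underline c_j\le d_G(v_j)\le\overline c_j$ for all $i,j$. *)

theory Defs
  imports Main
begin

text \<open>Integer vectors of length n are functions nat => int, positions 0..n-1
  (0-based). A bipartite graph with sides U = {u_0..u_(n1-1)}, V = {v_0..v_(n2-1)}
  is a set E of pairs (i,j) with i < n1, j < n2 (edge u_i v_j).\<close>

definition deg_U :: "(nat \<times> nat) set \<Rightarrow> nat \<Rightarrow> nat" where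
  "deg_U E i = card {j. (i, j) \<in> E}"

definition deg_V :: "(nat \<times> nat) set \<Rightarrow> nat \<Rightarrow> nat" where
  "deg_V E j = card {i. (i, j) \<in> E}"

definition realizable ::
  "nat \<Rightarrow> nat \<Rightarrow> (nat \<Rightarrow> int) \<Rightarrow> (nat \<Rightarrow> int) \<Rightarrow> (nat \<Rightarrow> int) \<Rightarrow> (nat \<Rightarrow> int) \<Rightarrow> bool" where
  "realizable n1 n2 rl ru cl cu \<longleftrightarrow>
     (\<exists>E. E \<subseteq> {..<n1} \<times> {..<n2} \<and>
        (\<forall>i<n1. rl i \<le> int (deg_U E i) \<and> int (deg_U E i) \<le> ru i) \<and>
        (\<forall>j<n2. cl j \<le> int (deg_V E j) \<and> int (deg_V E j) \<le> cu j))"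

definition nonincreasing :: "nat \<Rightarrow> (nat \<Rightarrow> int) \<Rightarrow> bool" where
  "nonincreasing n f \<longleftrightarrow> (\<forall>i j. i \<le> j \<longrightarrow> j < n \<longrightarrow> f j \<le> f i)"

end

theory Submission
  imports Defs
begin

lemma card_swap_elem:
  assumes "finite A" "k \<in> A" "i \<notin> A"
  shows "card (insert i (A - {k})) = card A"
proof -
  have "card (insert i (A - {k})) = Suc (card (A - {k}))"
    using assms by (simp add: card_insert_disjoint)
  also have "\<dots> = card A"
  proof -
    have "card A > 0" using assms card_gt_0_iff by blast
    thus ?thesis using assms by (simp add: card_Diff_singleton)
  qed
  finally show ?thesis .
qed

theorem lemma1:
  fixes n1 n2 :: nat and rl ru c cu :: "nat \<Rightarrow> int"
  assumes "nonincreasing n1 rl" and "nonincreasing n2 c"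
    and "\<forall>i<n1. rl i \<le> ru i" and "\<forall>k<n2. c k \<le> cu k"
    and "realizable n1 n2 rl ru c cu"
    and "\<not> realizable n1 n2 rl ru c c"
  shows "\<exists>i<n2. c i < cu i \<and> (\<forall>k. i < k \<and> k < n2 \<longrightarrow> \<not> c k < cu k) \<and>
           (let j = (LEAST k. c k = c i);
                a = c(j := c j + 1);
                ab = cu(j := cu i, i := cu j)
            in nonincreasing n2 a \<and> (\<forall>k<n2. a k \<le> ab k) \<and>
               realizable n1 n2 rl ru a ab)"
proof -
  from assms(5) obtain E where Esub: "E \<subseteq> {..<n1} \<times> {..<n2}"
    and Erow: "\<forall>i<n1. rl i \<le> int (deg_U E i) \<and> int (deg_U E i) \<le> ru i"
    and Ecol: "\<forall>j<n2. c j \<le> int (deg_V E j) \<and> int (deg_V E j) \<le> cu j"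
    unfolding realizable_def by blast
  obtain k where k: "k<n2" "c k < int (deg_V E k)"
  proof (rule ccontr)
    assume "\<not> thesis"
    have "\<forall>j<n2. int (deg_V E j) \<le> c j"
    proof (intro allI impI)
      fix j assume j: "j < n2"
      show "int (deg_V E j) \<le> c j"
      proof (rule ccontr)
        assume "\<not> int (deg_V E j) \<le> c j"
        hence "c j < int (deg_V E j)" by simp
        with that j have thesis by blast
        with \<open>\<not> thesis\<close> show False by blast
      qed
    qed
    with Ecol have "\<forall>j<n2. c j \<le> int (deg_V E j) \<and> int (deg_V E j) \<le> c j" by auto
    with Esub Erow assms(6) show False unfolding realizable_def by blast
  qed
  define S where "S = {k. k<n2 \<and> c k < cu k}"
  have kS: "k \<in> S" using k Ecol by (force simp: S_def)
  have finS: "finite S" unfolding S_def by simp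
  define i where "i = Max S"
  have iS: "i \<in> S" unfolding i_def using kS finS Max_in by blast
  have imax: "\<forall>m\<in>S. m \<le> i" unfolding i_def using finS by simp
  have ki: "k \<le> i" using imax kS by simp
  have in2: "i < n2" and ci: "c i < cu i" using iS by (auto simp: S_def)
  have fincol: "\<And>H m. H \<subseteq> {..<n1} \<times> {..<n2} \<Longrightarrow> finite {w. (w,m)\<in>H}"
  proof -
    fix H :: "(nat\<times>nat) set" and m assume "H \<subseteq> {..<n1} \<times> {..<n2}"
    hence "{w. (w,m)\<in>H} \<subseteq> {..<n1}" by auto
    thus "finite {w. (w,m)\<in>H}" using finite_subset by blast
  qed
  have finrow: "\<And>H m. H \<subseteq> {..<n1} \<times> {..<n2} \<Longrightarrow> finite {w. (m,w)\<in>H}"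
  proof -
    fix H :: "(nat\<times>nat) set" and m assume "H \<subseteq> {..<n1} \<times> {..<n2}"
    hence "{w. (m,w)\<in>H} \<subseteq> {..<n2}" by auto
    thus "finite {w. (m,w)\<in>H}" using finite_subset by blast
  qed
  have "\<exists>G. G \<subseteq> {..<n1} \<times> {..<n2} \<and>
        (\<forall>i<n1. rl i \<le> int (deg_U G i) \<and> int (deg_U G i) \<le> ru i) \<and>
        (\<forall>j<n2. c j \<le> int (deg_V G j) \<and> int (deg_V G j) \<le> cu j) \<and> c i < int (deg_V G i)"
  proof (cases "c i < int (deg_V E i)")
    case True then show ?thesis using Esub Erow Ecol by blast
  next
    case False
    then have di: "int (deg_V E i) = c i" using Ecol in2 by force
    have "c i \<le> c k" using assms(2) ki in2 unfolding nonincreasing_def by auto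
    hence lt: "deg_V E i < deg_V E k" using k di by linarith
    hence ik: "k \<noteq> i" by auto
    have "\<not> {u. (u,k)\<in>E} \<subseteq> {u. (u,i)\<in>E}"
    proof
      assume "{u. (u,k)\<in>E} \<subseteq> {u. (u,i)\<in>E}"
      hence "deg_V E k \<le> deg_V E i" unfolding deg_V_def
        using fincol[OF Esub] by (simp add: card_mono)
      with lt show False by simp
    qed
    then obtain u where u: "(u,k)\<in>E" "(u,i)\<notin>E" by blast
    have un1: "u < n1" using u Esub by auto
    define G where "G = insert (u,i) (E - {(u,k)})"
    have Gsub: "G \<subseteq> {..<n1} \<times> {..<n2}" using Esub un1 in2 by (auto simp: G_def)
    have rowsame: "deg_U G v = deg_U E v" for v
    proof (cases "v = u")
      case True
      have "{j. (v,j)\<in>G} = insert i ({j. (u,j)\<in>E} - {k})" using True by (auto simp: G_def)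
      moreover have "card (insert i ({j. (u,j)\<in>E} - {k})) = card {j. (u,j)\<in>E}"
        using u finrow[OF Esub] by (intro card_swap_elem) auto
      ultimately show ?thesis unfolding deg_U_def using True by simp
    next
      case False
      have "{j. (v,j)\<in>G} = {j. (v,j)\<in>E}" using False by (auto simp: G_def)
      thus ?thesis unfolding deg_U_def by simp
    qed
    have colI: "deg_V G i = deg_V E i + 1"
    proof -
      have "{w. (w,i)\<in>G} = insert u {w. (w,i)\<in>E}" using ik by (auto simp: G_def)
      thus ?thesis unfolding deg_V_def using u fincol[OF Esub] by simp
    qed
    have colK: "deg_V G k = deg_V E k - 1"
    proof -
      have "{w. (w,k)\<in>G} = {w. (w,k)\<in>E} - {u}" using ik by (auto simp: G_def)
      thus ?thesis unfolding deg_V_def using u fincol[OF Esub] by simp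
    qed
    have colM: "deg_V G m = deg_V E m" if "m \<noteq> i" "m \<noteq> k" for m
    proof -
      have "{w. (w,m)\<in>G} = {w. (w,m)\<in>E}" using that by (auto simp: G_def)
      thus ?thesis unfolding deg_V_def by simp
    qed
    have "\<forall>j<n2. c j \<le> int (deg_V G j) \<and> int (deg_V G j) \<le> cu j"
    proof (intro allI impI)
      fix m assume m: "m < n2"
      show "c m \<le> int (deg_V G m) \<and> int (deg_V G m) \<le> cu m"
      proof (cases "m = i")
        case True thus ?thesis using colI di ci by simp
      next
        case F: False
        show ?thesis
        proof (cases "m = k")
          case True thus ?thesis using colK k Ecol lt by auto
        next
          case False thus ?thesis using colM F Ecol m by simp
        qed
      qed
    qed
    moreover have "c i < int (deg_V G i)" using colI di by simp
    ultimately show ?thesis using Gsub Erow by (intro exI[of _ G]) (simp add: rowsame)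
  qed
  then obtain G where Gsub: "G \<subseteq> {..<n1} \<times> {..<n2}"
    and Grow: "\<forall>i<n1. rl i \<le> int (deg_U G i) \<and> int (deg_U G i) \<le> ru i"
    and Gcol: "\<forall>j<n2. c j \<le> int (deg_V G j) \<and> int (deg_V G j) \<le> cu j"
    and Gi: "c i < int (deg_V G i)" by blast
  define j where "j = (LEAST k. c k = c i)"
  have ji: "j \<le> i" unfolding j_def by (rule Least_le) simp
  have cj: "c j = c i" unfolding j_def by (rule LeastI) simp
  have jmin: "\<And>p. p < j \<Longrightarrow> c p \<noteq> c i" unfolding j_def using not_less_Least by blast
  have jn2: "j < n2" using ji in2 by simp
  define a where "a = c(j := c j + 1)"
  define ab where "ab = cu(j := cu i, i := cu j)"
  define \<sigma> where "\<sigma> = (\<lambda>x::nat. if x = i then j else if x = j then i else x)"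
  have ss: "\<sigma> (\<sigma> x) = x" for x by (simp add: \<sigma>_def)
  have sn: "x < n2 \<Longrightarrow> \<sigma> x < n2" for x using ji in2 by (simp add: \<sigma>_def)
  define F where "F = (\<lambda>(u,v). (u, \<sigma> v)) ` G"
  have Fmem: "(u,v) \<in> F \<longleftrightarrow> (u, \<sigma> v) \<in> G" for u v
  proof
    assume "(u,v) \<in> F" thus "(u, \<sigma> v) \<in> G" unfolding F_def using ss by auto
  next
    assume "(u, \<sigma> v) \<in> G"
    hence "(\<lambda>(u,v). (u, \<sigma> v)) (u, \<sigma> v) \<in> F" unfolding F_def by blast
    thus "(u,v) \<in> F" using ss by simp
  qed
  have Fsub: "F \<subseteq> {..<n1} \<times> {..<n2}" using Gsub sn unfolding F_def by auto
  have injs: "inj \<sigma>" by (metis injI ss)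
  have FU: "deg_U F u = deg_U G u" for u
  proof -
    have "{v. (u,v)\<in>F} = \<sigma> ` {v. (u,v)\<in>G}" 
    proof (rule set_eqI, rule iffI)
      fix v assume "v \<in> {v. (u,v)\<in>F}"
      hence "\<sigma> v \<in> {v. (u,v)\<in>G}" using Fmem by simp
      hence "\<sigma> (\<sigma> v) \<in> \<sigma> ` {v. (u,v)\<in>G}" by (rule imageI)
      thus "v \<in> \<sigma> ` {v. (u,v)\<in>G}" using ss by simp
    next
      fix v assume "v \<in> \<sigma> ` {v. (u,v)\<in>G}"
      then obtain w where "v = \<sigma> w" "(u,w)\<in>G" by blast
      thus "v \<in> {v. (u,v)\<in>F}" using Fmem ss by simp
    qed
    moreover have "card (\<sigma> ` {v. (u,v)\<in>G}) = card {v. (u,v)\<in>G}"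
      using injs by (meson card_image inj_on_subset subset_UNIV)
    ultimately show ?thesis unfolding deg_U_def by simp
  qed
  have FV: "deg_V F v = deg_V G (\<sigma> v)" for v
    unfolding deg_V_def using Fmem by simp
  have "realizable n1 n2 rl ru a ab"
    unfolding realizable_def
  proof (intro exI conjI)
    show "F \<subseteq> {..<n1} \<times> {..<n2}" by (rule Fsub)
    show "\<forall>i<n1. rl i \<le> int (deg_U F i) \<and> int (deg_U F i) \<le> ru i" using Grow FU by simp
    show "\<forall>m<n2. a m \<le> int (deg_V F m) \<and> int (deg_V F m) \<le> ab m"
    proof (intro allI impI)
      fix m assume m: "m < n2"
      show "a m \<le> int (deg_V F m) \<and> int (deg_V F m) \<le> ab m"
      proof (cases "m = j")
        case True thus ?thesis using Gi Gcol[rule_format, OF in2] cj unfolding FV a_def ab_def \<sigma>_def by auto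
      next
        case F: False
        show ?thesis
        proof (cases "m = i")
          case True thus ?thesis using F Gcol[rule_format, OF jn2] cj unfolding FV a_def ab_def \<sigma>_def by auto
        next
          case False thus ?thesis using F Gcol m unfolding FV a_def ab_def \<sigma>_def by auto
        qed
      qed
    qed
  qed
  moreover have "nonincreasing n2 a"
    unfolding nonincreasing_def
  proof (intro allI impI)
    fix p q assume pq: "p \<le> q" "q < n2"
    have cpq: "c q \<le> c p" using assms(2) pq unfolding nonincreasing_def by blast
    show "a q \<le> a p"
    proof (cases "q = j")
      case True
      show ?thesis
      proof (cases "p = j")
        case False
        hence "p < j" using pq True by simp
        hence "c p \<noteq> c j" using jmin cj by simp
        thus ?thesis using cpq True False by (simp add: a_def)
      qed (simp add: True)
    next
      case False thus ?thesis using cpq by (cases "p = j") (auto simp: a_def)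
    qed
  qed
  moreover have "\<forall>m<n2. a m \<le> ab m"
  proof (intro allI impI)
    fix m assume m: "m < n2"
    show "a m \<le> ab m"
    proof (cases "m = j")
      case True thus ?thesis using ci cj by (simp add: a_def ab_def)
    next
      case F: False
      show ?thesis
      proof (cases "m = i")
        case True thus ?thesis using F assms(4)[rule_format, OF jn2] cj by (simp add: a_def ab_def)
      next
        case False thus ?thesis using F assms(4) m by (simp add: a_def ab_def)
      qed
    qed
  qed
  moreover have "\<forall>m. i < m \<and> m < n2 \<longrightarrow> \<not> c m < cu m"
  proof (intro allI impI)
    fix m assume "i < m \<and> m < n2"
    thus "\<not> c m < cu m" using imax unfolding S_def by force
  qed
  ultimately have fin: "i < n2 \<and> c i < cu i \<and> (\<forall>k. i < k \<and> k < n2 \<longrightarrow> \<not> c k < cu k) \<and>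
           (let j = (LEAST k. c k = c i);
                a = c(j := c j + 1);
                ab = cu(j := cu i, i := cu j)
            in nonincreasing n2 a \<and> (\<forall>k<n2. a k \<le> ab k) \<and>
               realizable n1 n2 rl ru a ab)"
    using in2 ci unfolding Let_def j_def[symmetric] a_def[symmetric] ab_def[symmetric] by (intro conjI)
  show ?thesis by (rule exI[of _ i]) (rule fin)
qed

end
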